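(* A finite-dimensional complex Lie algebra $\mathfrak{g}$ admits a periodic prederivation of odd order if and only if $\mathfrak{g}$ is nilpotent of class at most two, i.e. $[\mathfrak{g},[\mathfrak{g},\mathfrak{g}]]=0$.
   Context: A linear map $P:\mathfrak{g}\to\mathfrak{g}$ is a prederivation if $P([x,[y,z]])=[P(x),[y,z]]+[x,[P(y),z]]+[x,[y,P(z)]]$ for all $x,y,z\in\mathfrak{g}$. It is periodic if $P^m=\mathrm{id}$ for some integer $m\ge 1$; its order is the smallest such $m$. *)

theory Defs
  imports "HOL-Analysis.Analysis"
begin

definition lie_algebra :: "(complex \<Rightarrow> 'a::ab_group_add \<Rightarrow> 'a) \<Rightarrow> ('a \<Rightarrow> 'a \<Rightarrow> 'a) \<Rightarrow> bool" where
  "lie_algebra sc br \<longleftrightarrow>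
     vector_space sc \<and>
     (\<forall>x. Vector_Spaces.linear sc sc (br x)) \<and>
     (\<forall>y. Vector_Spaces.linear sc sc (\<lambda>x. br x y)) \<and>
     (\<forall>x. br x x = 0) \<and>
     (\<forall>x y z. br x (br y z) + br y (br z x) + br z (br x y) = 0)"

definition prederivation :: "(complex \<Rightarrow> 'a::ab_group_add \<Rightarrow> 'a) \<Rightarrow> ('a \<Rightarrow> 'a \<Rightarrow> 'a) \<Rightarrow> ('a \<Rightarrow> 'a) \<Rightarrow> bool" where
  "prederivation sc br P \<longleftrightarrow>
     Vector_Spaces.linear sc sc P \<and>
     (\<forall>x y z. P (br x (br y z)) = br (P x) (br y z) + br x (br (P y) z) + br x (br y (P z)))"

definition periodic_of_order :: "('a \<Rightarrow> 'a) \<Rightarrow> nat \<Rightarrow> bool" where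
  "periodic_of_order P m \<longleftrightarrow> m \<ge> 1 \<and> (P ^^ m) = id \<and> (\<forall>k. 1 \<le> k \<and> k < m \<longrightarrow> (P ^^ k) \<noteq> id)"

end

theory Submission
  imports Defs
begin

lemma three_unit:
  fixes a b c :: complex
  assumes "norm a = 1" "norm b = 1" "norm c = 1" "norm (a+b+c) = 1"
  shows "(a+b)*(b+c)*(c+a) = 0"
proof -
  have ca: "a * cnj a = 1" using complex_norm_square[of a] assms by simp
  have cb: "b * cnj b = 1" using complex_norm_square[of b] assms by simp
  have cc: "c * cnj c = 1" using complex_norm_square[of c] assms by simp
  have cs: "(a+b+c) * (cnj a + cnj b + cnj c) = 1" using complex_norm_square[of "a+b+c"] assms by simp
  have "(a+b+c) * (b*c + a*c + a*b) = a*b*c"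
  proof -
    have e: "(cnj a + cnj b + cnj c) * (a*b*c) = b*c*(a*cnj a) + a*c*(b*cnj b) + a*b*(c*cnj c)"
      by (simp add: algebra_simps)
    have "(a+b+c) * (b*c + a*c + a*b) = (a+b+c) * (cnj a + cnj b + cnj c) * (a*b*c)"
      unfolding mult.assoc[of "a+b+c"] e ca cb cc by simp
    then show ?thesis using cs by simp
  qed
  then show ?thesis by algebra
qed

lemma roots_sum:
  fixes a b c :: complex and m :: nat
  assumes "a^m = 1" "b^m = 1" "c^m = 1" "odd m"
  shows "(a+b+c)^m \<noteq> 1"
proof
  assume h: "(a+b+c)^m = 1"
  have m0: "0 < m" using assms(4) by (cases m) auto
  have n1: "norm z = 1" if "z^m = 1" for z :: complex
  proof -
    have "norm z ^ m = 1 ^ m" using that by (metis norm_one norm_power power_one)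
    then show ?thesis using power_eq_imp_eq_base[of "norm z" m 1] m0 by simp
  qed
  have "(a+b)*(b+c)*(c+a) = 0" by (rule three_unit) (use n1 assms h in auto)
  then have "b = -a \<or> c = -b \<or> a = -c" by (auto simp: add_eq_0_iff)
  moreover have "(-z)^m = - (z^m)" for z :: complex using assms(4) by (simp add: power_minus_odd)
  ultimately show False using assms by auto
qed

lemma lin_add: "Vector_Spaces.linear sc sc f \<Longrightarrow> f (x + y) = f x + f y"
  by (simp add: Vector_Spaces.linear_iff)
lemma lin_scale: "Vector_Spaces.linear sc sc f \<Longrightarrow> f (sc c x) = sc c (f x)"
  by (simp add: Vector_Spaces.linear_iff)
lemma lin_sum: "Vector_Spaces.linear sc sc f \<Longrightarrow> f (sum g A) = (\<Sum>a\<in>A. f (g a))"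
  by (simp add: module_hom.sum module_hom_iff_linear[symmetric])

lemma sum_shift_periodic:
  fixes g :: "nat \<Rightarrow> 'a::ab_group_add"
  assumes "g m = g 0"
  shows "(\<Sum>k<m. g (Suc k)) = (\<Sum>k<m. g k)"
proof -
  have "(\<Sum>k<Suc m. g k) = g 0 + (\<Sum>k<m. g (Suc k))" by (rule sum.lessThan_Suc_shift)
  moreover have "(\<Sum>k<Suc m. g k) = (\<Sum>k<m. g k) + g m" by simp
  ultimately show ?thesis using assms by (simp add: algebra_simps)
qed

locale LP = vector_space sc for sc :: "complex \<Rightarrow> 'a::ab_group_add \<Rightarrow> 'a" +
  fixes br :: "'a \<Rightarrow> 'a \<Rightarrow> 'a" and P :: "'a \<Rightarrow> 'a" and m :: nat
  assumes bl: "\<And>x. Vector_Spaces.linear sc sc (br x)"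
    and bri: "\<And>y. Vector_Spaces.linear sc sc (\<lambda>x. br x y)"
    and Pl: "Vector_Spaces.linear sc sc P"
    and Pd: "\<And>x y z. P (br x (br y z)) = br (P x) (br y z) + br x (br (P y) z) + br x (br y (P z))"
    and Pm: "P ^^ m = id" and modd: "odd m"
begin

lemma Ppow_scale: "(P ^^ k) (sc c x) = sc c ((P ^^ k) x)"
  by (induction k) (simp_all add: lin_scale[OF Pl])

lemma eig_zero:
  assumes u: "P u = sc a u" and v: "P v = sc b v" and w: "P w = sc c w"
    and am: "a^m = 1" and bm: "b^m = 1" and cm: "c^m = 1"
  shows "br u (br v w) = 0"
proof -
  define T where "T = br u (br v w)"
  define s where "s = a + b + c"
  have PT: "P T = sc s T"
  proof -
    have "P T = br (sc a u) (br v w) + br u (br (sc b v) w) + br u (br v (sc c w))"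
      unfolding T_def Pd u v w ..
    also have "\<dots> = sc a T + sc b T + sc c T"
      unfolding T_def using lin_scale[OF bri] lin_scale[OF bl] by simp
    also have "\<dots> = sc s T" unfolding s_def by (simp add: scale_left_distrib)
    finally show ?thesis .
  qed
  have pw: "(P ^^ k) T = sc (s^k) T" for k
    by (induction k) (simp_all add: PT lin_scale[OF Pl] mult.commute)
  have "T = sc (s^m) T" using pw[of m] Pm by simp
  then have "sc (s^m - 1) T = 0" by (simp add: scale_left_diff_distrib)
  moreover have "s^m - 1 \<noteq> 0" using roots_sum[OF am bm cm modd] unfolding s_def by simp
  ultimately have "sc (inverse (s^m - 1)) (sc (s^m - 1) T) = T" by simp
  then show ?thesis unfolding T_def[symmetric] using \<open>sc (s^m - 1) T = 0\<close> by simp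
qed

definition U :: "complex \<Rightarrow> 'a \<Rightarrow> 'a" where
  "U \<eta> x = (\<Sum>k<m. sc ((inverse \<eta>)^k) ((P ^^ k) x))"

lemma U_eig:
  assumes "\<eta>^m = 1"
  shows "P (U \<eta> x) = sc \<eta> (U \<eta> x)"
proof -
  have m0: "m > 0" using modd by (cases m) auto
  have nz: "\<eta> \<noteq> 0" proof
    assume "\<eta> = 0" then show False using assms m0 by (simp add: power_0_left)
  qed
  define g where "g k = sc ((inverse \<eta>)^k) ((P ^^ k) x)" for k
  have gm: "g m = g 0" unfolding g_def using assms Pm by (simp add: power_inverse)
  have "P (U \<eta> x) = (\<Sum>k<m. sc ((inverse \<eta>)^k) ((P ^^ Suc k) x))"
    unfolding U_def lin_sum[OF Pl] lin_scale[OF Pl] by simp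
  also have "\<dots> = (\<Sum>k<m. sc \<eta> (g (Suc k)))"
    unfolding g_def using nz by (intro sum.cong refl) (simp add: field_simps)
  also have "\<dots> = sc \<eta> (\<Sum>k<m. g (Suc k))" by (simp add: scale_sum_right)
  also have "\<dots> = sc \<eta> (U \<eta> x)" by (simp only: sum_shift_periodic[OF gm]) (simp add: U_def g_def)
  finally show ?thesis .
qed

lemma m0: "m > 0" using modd by (cases m) auto

lemma br_sumL: "br (sum g A) y = (\<Sum>a\<in>A. br (g a) y)"
  using lin_sum[OF bri[of y], of g A] by simp
lemma br_sumR: "br x (sum g A) = (\<Sum>a\<in>A. br x (g a))"
  using lin_sum[OF bl, of x g A] by simp

definition om :: complex where "om = cis (2 * pi / real m)"

lemma om_pow: "om ^ k = cis (2 * pi * real k / real m)"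
  unfolding om_def Complex.DeMoivre by (simp add: field_simps)

lemma om_m: "(om ^ j) ^ m = 1"
proof -
  have "om ^ m = 1" unfolding om_pow using m0 by simp
  then show ?thesis by (metis power_mult mult.commute power_one)
qed

lemma om_ne: assumes "0 < k" "k < m" shows "om ^ k \<noteq> 1"
proof
  assume h: "om ^ k = 1"
  have inj: "inj_on (\<lambda>k. cis (2 * pi * real k / real m)) {..<m}"
    using Complex.bij_betw_roots_unity[OF m0] by (rule bij_betw_imp_inj_on)
  have "cis (2 * pi * real k / real m) = cis (2 * pi * real 0 / real m)"
    using h om_pow by simp
  then have "k = 0" using inj_onD[OF inj] assms m0 by auto
  then show False using assms by simp
qed

lemma geo: assumes "k < m"
  shows "(\<Sum>j<m. (inverse (om ^ j))^k) = (if k = 0 then of_nat m else 0)"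
proof (cases "k = 0")
  case True then show ?thesis by simp
next
  case False
  define q where "q = inverse (om ^ k)"
  have "(\<Sum>j<m. (inverse (om ^ j))^k) = (\<Sum>j<m. q ^ j)"
    unfolding q_def by (intro sum.cong refl) (simp add: power_inverse flip: power_mult, simp add: mult.commute)
  also have "\<dots> = 0"
  proof -
    have q1: "q \<noteq> 1" unfolding q_def using om_ne[of k] False assms by auto
    have "q ^ m = 1" unfolding q_def using om_m[of k] by (simp add: power_inverse)
    then show ?thesis using geometric_sum[OF q1, of m] by simp
  qed
  finally show ?thesis using False by simp
qed

definition E :: "nat \<Rightarrow> 'a \<Rightarrow> 'a" where
  "E j x = sc (1 / of_nat m) (U (om ^ j) x)"

lemma E_eig: "P (E j x) = sc (om ^ j) (E j x)"
  unfolding E_def lin_scale[OF Pl] U_eig[OF om_m] by (simp add: mult.commute)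

lemma E_sum: "(\<Sum>j<m. E j x) = x"
proof -
  have "(\<Sum>j<m. U (om ^ j) x) = (\<Sum>j<m. \<Sum>k<m. sc ((inverse (om ^ j))^k) ((P ^^ k) x))"
    unfolding U_def by (simp add: power_inverse)
  also have "\<dots> = (\<Sum>k<m. \<Sum>j<m. sc ((inverse (om ^ j))^k) ((P ^^ k) x))"
    by (rule sum.swap)
  also have "\<dots> = (\<Sum>k<m. sc (\<Sum>j<m. (inverse (om ^ j))^k) ((P ^^ k) x))"
    by (simp add: scale_sum_left)
  also have "\<dots> = (\<Sum>k<m. if k = 0 then sc (of_nat m) x else 0)"
    by (intro sum.cong refl) (simp add: geo)
  also have "\<dots> = sc (of_nat m) x" using m0 by simp
  finally have "(\<Sum>j<m. U (om ^ j) x) = sc (of_nat m) x" .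
  then show ?thesis unfolding E_def using m0
    by (simp flip: scale_sum_right)
qed

lemma main: "br x (br y z) = 0"
proof -
  have "br x (br y z) = br (\<Sum>i<m. E i x) (br (\<Sum>j<m. E j y) (\<Sum>l<m. E l z))"
    by (simp add: E_sum)
  also have "\<dots> = 0"
    by (simp add: br_sumL br_sumR eig_zero[OF E_eig E_eig E_eig om_m om_m om_m])
  finally show ?thesis .
qed

end


theorem proposition5p5:
  fixes sc :: "complex \<Rightarrow> 'a::ab_group_add \<Rightarrow> 'a"
    and br :: "'a \<Rightarrow> 'a \<Rightarrow> 'a"
    and B :: "'a set"
  assumes "lie_algebra sc br"
    and "finite_dimensional_vector_space sc B"
  shows "(\<exists>P m. prederivation sc br P \<and> periodic_of_order P m \<and> odd m)
         \<longleftrightarrow> (\<forall>x y z. br x (br y z) = 0)"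
proof
  assume "\<exists>P m. prederivation sc br P \<and> periodic_of_order P m \<and> odd m"
  then obtain P m where pd: "prederivation sc br P" and po: "periodic_of_order P m" and od: "odd m"
    by blast
  have "LP sc br P m"
    using assms(1) pd po od unfolding lie_algebra_def prederivation_def periodic_of_order_def
      LP_def LP_axioms_def by blast
  then interpret LP sc br P m .
  show "\<forall>x y z. br x (br y z) = 0" using main by blast
next
  assume h: "\<forall>x y z. br x (br y z) = 0"
  have vs: "vector_space sc" using assms(1) unfolding lie_algebra_def by blast
  have "prederivation sc br id"
    unfolding prederivation_def using h vector_space.linear_id[OF vs] by simp
  moreover have "periodic_of_order (id :: 'a \<Rightarrow> 'a) 1" unfolding periodic_of_order_def by auto
  ultimately show "\<exists>P m. prederivation sc br P \<and> periodic_of_order P m \<and> odd m" by fastforce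
qed

end
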